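(* $\limsup_{t\to\infty} r_t \leq 2\sqrt{6}-4$.
   Context: Let $t$ be a positive integer (the number of topics). A voter matrix with $t$ topics is a matrix $V\in\{Y,N\}^{n\times t}$ for some positive integer $n$ (rows are voters), subject to the standing assumption that in every column the number of entries $Y$ is at least the number of entries $N$. $\mathcal{V}_t$ is the set of all voter matrices with $t$ topics and any number of voters. A proposal is a vector $p\in\{Y,N\}^t$. A voter $v$ supports $p$ if the Hamming distance between $v$ and $p$ is at most $t/2$; $p$ is supported by $V$ if at least $n/2$ rows of $V$ support $p$. For $i=1,\dots,t$ let $m_i$ be the fraction of entries $Y$ in column $i$ of $V$, and $m_V=\frac1t\sum_i m_i$. For a proposal $p$ let $m_i'=m_i$ if $p_i=Y$ and $m_i'=1-m_i$ if $p_i=N$; set $R_p=\frac1t\sum_i m_i'$ and $r_p=R_p/m_V$. Let $r_V=\max r_p$, the maximum over all proposals $p$ supported by $V$, and $r_t=\inf_{V\in\mathcal{V}_t} r_V$. *)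

theory Defs
  imports Complex_Main "HOL-Library.Extended_Real"
begin

text \<open>A voter matrix with t topics and n voters: V i j (i < n, j < t); True = Y, False = N.
  Entries outside the range are irrelevant. A proposal p is given as the set of topics j < t
  on which it says Y.\<close>

definition voter_matrix :: "nat \<Rightarrow> nat \<Rightarrow> (nat \<Rightarrow> nat \<Rightarrow> bool) \<Rightarrow> bool" where
  "voter_matrix t n V \<longleftrightarrow> n > 0 \<and>
     (\<forall>j<t. card {i. i < n \<and> \<not> V i j} \<le> card {i. i < n \<and> V i j})"

definition hamming :: "nat \<Rightarrow> (nat \<Rightarrow> bool) \<Rightarrow> nat set \<Rightarrow> nat" where
  "hamming t v p = card {j. j < t \<and> v j \<noteq> (j \<in> p)}"

definition supports :: "nat \<Rightarrow> (nat \<Rightarrow> bool) \<Rightarrow> nat set \<Rightarrow> bool" where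
  "supports t v p \<longleftrightarrow> real (hamming t v p) \<le> real t / 2"

definition supported :: "nat \<Rightarrow> nat \<Rightarrow> (nat \<Rightarrow> nat \<Rightarrow> bool) \<Rightarrow> nat set \<Rightarrow> bool" where
  "supported t n V p \<longleftrightarrow> real (card {i. i < n \<and> supports t (V i) p}) \<ge> real n / 2"

definition col_frac :: "nat \<Rightarrow> (nat \<Rightarrow> nat \<Rightarrow> bool) \<Rightarrow> nat \<Rightarrow> real" where
  "col_frac n V j = real (card {i. i < n \<and> V i j}) / real n"

definition m_V :: "nat \<Rightarrow> nat \<Rightarrow> (nat \<Rightarrow> nat \<Rightarrow> bool) \<Rightarrow> real" where
  "m_V t n V = (\<Sum>j<t. col_frac n V j) / real t"

definition R_p :: "nat \<Rightarrow> nat \<Rightarrow> (nat \<Rightarrow> nat \<Rightarrow> bool) \<Rightarrow> nat set \<Rightarrow> real" where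
  "R_p t n V p = (\<Sum>j<t. if j \<in> p then col_frac n V j else 1 - col_frac n V j) / real t"

definition r_p :: "nat \<Rightarrow> nat \<Rightarrow> (nat \<Rightarrow> nat \<Rightarrow> bool) \<Rightarrow> nat set \<Rightarrow> real" where
  "r_p t n V p = R_p t n V p / m_V t n V"

definition r_V :: "nat \<Rightarrow> nat \<Rightarrow> (nat \<Rightarrow> nat \<Rightarrow> bool) \<Rightarrow> real" where
  "r_V t n V = Max (r_p t n V ` {p. p \<subseteq> {..<t} \<and> supported t n V p})"

definition r_t :: "nat \<Rightarrow> real" where
  "r_t t = Inf {r_V t n V | n V. voter_matrix t n V}"

end

theory Submission
  imports Defs
begin

lemma mod_small2: "(x::nat) < 2 * t \<Longrightarrow> x mod t = (if x < t then x else x - t)"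
  by (simp add: le_mod_geq)

lemma cyc_card:
  assumes "k \<le> t" "c < t"
  shows "card {x. x < t \<and> (x + c) mod t < k} = k"
proof -
  let ?f = "\<lambda>x. (x + c) mod t"
  have inj: "inj_on ?f {..<t}"
  proof (rule inj_onI)
    fix x y assume "x \<in> {..<t}" "y \<in> {..<t}" "?f x = ?f y"
    then show "x = y" using assms mod_small2[of "x + c" t] mod_small2[of "y + c" t]
      by (auto split: if_splits)
  qed
  have sub: "?f ` {..<t} \<subseteq> {..<t}" using assms by auto
  have img: "?f ` {..<t} = {..<t}"
    by (rule card_subset_eq) (use inj sub card_image[OF inj] in auto)
  have e: "{x. x < t \<and> (x + c) mod t < k} = {x \<in> {..<t}. ?f x < k}" by auto
  have "?f ` {x \<in> {..<t}. ?f x < k} = {y \<in> ?f ` {..<t}. y < k}" by auto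
  also have "\<dots> = {..<k}" using img assms by auto
  finally have im: "?f ` {x \<in> {..<t}. ?f x < k} = {..<k}" .
  have "card (?f ` {x \<in> {..<t}. ?f x < k}) = card {x \<in> {..<t}. ?f x < k}"
    by (rule card_image, rule inj_on_subset[OF inj]) blast
  then have "card {x \<in> {..<t}. ?f x < k} = k" unfolding im by simp
  then show ?thesis using e by metis
qed

lemma ham_compl: "hamming t v p + hamming t v ({..<t} - p) = t"
proof -
  have "{j. j < t \<and> v j \<noteq> (j \<in> p)} \<union> {j. j < t \<and> v j \<noteq> (j \<in> {..<t} - p)} = {..<t}"
    by auto
  moreover have "{j. j < t \<and> v j \<noteq> (j \<in> p)} \<inter> {j. j < t \<and> v j \<noteq> (j \<in> {..<t} - p)} = {}"
    by auto
  ultimately show ?thesis unfolding hamming_def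
    by (metis (no_types, lifting) card_Un_disjoint card_lessThan finite_Un finite_lessThan)
qed

lemma card_split: "card {i. i < n \<and> P i} + card {i. i < n \<and> \<not> P i} = (n::nat)"
proof -
  have "{i. i < n \<and> P i} \<union> {i. i < n \<and> \<not> P i} = {..<n}" by auto
  moreover have "{i. i < n \<and> P i} \<inter> {i. i < n \<and> \<not> P i} = {}" by auto
  ultimately show ?thesis
    by (metis (no_types, lifting) card_Un_disjoint card_lessThan finite_Un finite_lessThan)
qed

lemma supp_exists:
  assumes "n > 0"
  shows "\<exists>p. p \<subseteq> {..<t} \<and> supported t n V p"
proof -
  let ?X = "{i. i < n \<and> supports t (V i) {}}"
  let ?Y = "{i. i < n \<and> supports t (V i) {..<t}}"
  have "\<forall>i. supports t (V i) {} \<or> supports t (V i) {..<t}"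
  proof
    fix i
    have "hamming t (V i) {} + hamming t (V i) ({..<t} - {}) = t" by (rule ham_compl)
    then show "supports t (V i) {} \<or> supports t (V i) {..<t}"
      unfolding supports_def by simp linarith
  qed
  then have "?X \<union> ?Y = {..<n}" by auto
  then have "n \<le> card ?X + card ?Y"
    by (metis card_Un_le card_lessThan)
  then have "real n \<le> real (card ?X) + real (card ?Y)" by (metis of_nat_add of_nat_le_iff)
  then have "real (card ?X) \<ge> real n / 2 \<or> real (card ?Y) \<ge> real n / 2" by linarith
  then have "supported t n V {} \<or> supported t n V {..<t}" unfolding supported_def by blast
  then show ?thesis by blast
qed

lemma r_p_nonneg:
  assumes "n > 0"
  shows "r_p t n V p \<ge> 0"
proof -
  have cf: "0 \<le> col_frac n V j \<and> col_frac n V j \<le> 1" for j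
  proof -
    have "card {i. i < n \<and> V i j} \<le> card {..<n}"
      by (rule card_mono) auto
    then have "card {i. i < n \<and> V i j} \<le> n" by simp
    then show ?thesis unfolding col_frac_def using assms by simp
  qed
  have "R_p t n V p \<ge> 0" unfolding R_p_def
    by (rule divide_nonneg_nonneg, rule sum_nonneg) (use cf in auto)
  moreover have "m_V t n V \<ge> 0" unfolding m_V_def
    by (rule divide_nonneg_nonneg, rule sum_nonneg) (use cf in auto)
  ultimately show ?thesis unfolding r_p_def by simp
qed

lemma r_V_nonneg:
  assumes "voter_matrix t n V"
  shows "r_V t n V \<ge> 0"
proof -
  have n: "n > 0" using assms voter_matrix_def by auto
  let ?S = "{p. p \<subseteq> {..<t} \<and> supported t n V p}"
  have fin: "finite ?S" by (rule finite_subset[of _ "Pow {..<t}"]) auto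
  obtain p where "p \<in> ?S" using supp_exists[OF n] by blast
  then have "r_p t n V p \<le> r_V t n V" unfolding r_V_def using fin by (intro Max_ge) auto
  then show ?thesis using r_p_nonneg[OF n, of t V p] by simp
qed

lemma r_t_le:
  assumes "voter_matrix t n V"
  shows "r_t t \<le> r_V t n V"
  unfolding r_t_def
  by (rule cInf_lower) (use assms r_V_nonneg in \<open>auto intro!: bdd_belowI[of _ 0]\<close>)


definition sc :: real where "sc = sqrt 6 / 2 - 1"

definition kk :: "nat \<Rightarrow> nat" where "kk t = nat \<lfloor>sc * real t\<rfloor>"

definition VV :: "nat \<Rightarrow> nat \<Rightarrow> nat \<Rightarrow> bool" where
  "VV t i j = (i < t - 1 \<or> (j + (i - (t - 1))) mod t < kk t)"

lemma sc_bounds: "1/5 \<le> sc" "sc < 1"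
proof -
  have "12/5 \<le> sqrt 6" by (rule real_le_rsqrt) (simp add: power2_eq_square)
  then show "1/5 \<le> sc" unfolding sc_def by simp
  have "sqrt 6 < sqrt 16" by (rule real_sqrt_less_mono) simp
  moreover have "sqrt 16 = 4" by (simp add: real_sqrt_eq_iff power2_eq_square)
  ultimately show "sc < 1" unfolding sc_def by simp
qed

lemma kk_bounds: assumes "t \<ge> 5" shows "1 \<le> kk t" "kk t \<le> t"
proof -
  have t5: "(5::real) \<le> real t" using assms by simp
  have "1/5 * 5 \<le> sc * real t"
    by (rule mult_mono) (use sc_bounds t5 in auto)
  then have a: "1 \<le> sc * real t" by simp
  then show "1 \<le> kk t" unfolding kk_def by linarith
  have "sc * real t \<le> 1 * real t" using sc_bounds by (intro mult_right_mono) auto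
  then have "\<lfloor>sc * real t\<rfloor> \<le> int t" by linarith
  then show "kk t \<le> t" unfolding kk_def by linarith
qed


lemma col_card:
  assumes "t \<ge> 5" "j < t"
  shows "card {i. i < 2*t-1 \<and> VV t i j} = t - 1 + kk t"
proof -
  let ?B = "{b. b < t \<and> (b + j) mod t < kk t}"
  have eq: "{i. i < 2*t-1 \<and> VV t i j} = {..<t-1} \<union> (\<lambda>b. b + (t-1)) ` ?B"
  proof (rule set_eqI, rule iffI)
    fix i assume "i \<in> {i. i < 2*t-1 \<and> VV t i j}"
    then have i: "i < 2*t-1" "VV t i j" by auto
    show "i \<in> {..<t-1} \<union> (\<lambda>b. b + (t-1)) ` ?B"
    proof (cases "i < t - 1")
      case True then show ?thesis by simp
    next
      case False
      then have "i = (i - (t-1)) + (t-1)" "i - (t-1) \<in> ?B"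
        using i assms unfolding VV_def by (auto simp: add.commute)
      then show ?thesis by blast
    qed
  next
    fix i assume "i \<in> {..<t-1} \<union> (\<lambda>b. b + (t-1)) ` ?B"
    then show "i \<in> {i. i < 2*t-1 \<and> VV t i j}"
      using assms unfolding VV_def by (auto simp: add.commute)
  qed
  have disj: "{..<t-1} \<inter> (\<lambda>b. b + (t-1)) ` ?B = {}" by auto
  have inj: "inj_on (\<lambda>b. b + (t-1)) ?B" by (auto intro: inj_onI)
  have "card ?B = kk t" using cyc_card[of "kk t" t j] kk_bounds[OF assms(1)] assms by simp
  then have "card ((\<lambda>b. b + (t-1)) ` ?B) = kk t" using card_image[OF inj] by simp
  then show ?thesis unfolding eq using disj
    by (subst card_Un_disjoint) auto
qed

lemma VV_matrix:
  assumes "t \<ge> 5"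
  shows "voter_matrix t (2*t-1) (VV t)"
  unfolding voter_matrix_def
proof (intro conjI allI impI)
  show "0 < 2*t-1" using assms by simp
  fix j assume j: "j < t"
  have "card {i. i < 2*t-1 \<and> VV t i j} + card {i. i < 2*t-1 \<and> \<not> VV t i j} = 2*t-1"
    by (rule card_split)
  then show "card {i. i < 2*t-1 \<and> \<not> VV t i j} \<le> card {i. i < 2*t-1 \<and> VV t i j}"
    using col_card[OF assms j] kk_bounds[OF assms] by linarith
qed


lemma supp_card:
  assumes t: "t \<ge> 5" and p: "p \<subseteq> {..<t}" and sp: "supported t (2*t-1) (VV t) p"
  shows "real (card p) \<le> real (kk t) + real t / 2"
proof -
  have "\<exists>i. t - 1 \<le> i \<and> i < 2*t-1 \<and> supports t (VV t i) p"
  proof (rule ccontr)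
    assume "\<not> ?thesis"
    then have "{i. i < 2*t-1 \<and> supports t (VV t i) p} \<subseteq> {..<t-1}" by force
    then have "card {i. i < 2*t-1 \<and> supports t (VV t i) p} \<le> t - 1"
      by (metis card_lessThan card_mono finite_lessThan)
    then have "real (card {i. i < 2*t-1 \<and> supports t (VV t i) p}) \<le> real t - 1"
      using t by linarith
    moreover have "real (card {i. i < 2*t-1 \<and> supports t (VV t i) p}) \<ge> real (2*t-1) / 2"
      using sp unfolding supported_def by simp
    moreover have "real (2*t-1) = 2 * real t - 1" using t by linarith
    ultimately show False by linarith
  qed
  then obtain i where i: "t - 1 \<le> i" "i < 2*t-1" "supports t (VV t i) p" by blast
  define b where "b = i - (t-1)"
  have b: "b < t" using i t unfolding b_def by linarith
  let ?S = "{j. j < t \<and> (j + b) mod t < kk t}"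
  have cS: "card ?S = kk t" using cyc_card[of "kk t" t b] kk_bounds[OF t] b by simp
  have sub: "p - ?S \<subseteq> {j. j < t \<and> VV t i j \<noteq> (j \<in> p)}"
    using p i t unfolding VV_def b_def by auto
  have "card p - card ?S \<le> card (p - ?S)" by (rule diff_card_le_card_Diff) simp
  also have "\<dots> \<le> hamming t (VV t i) p" unfolding hamming_def
    by (rule card_mono[OF _ sub]) simp
  finally have "card p \<le> kk t + hamming t (VV t i) p" using cS by linarith
  then have "real (card p) \<le> real (kk t) + real (hamming t (VV t i) p)" by linarith
  then show ?thesis using i(3) unfolding supports_def by linarith
qed


definition mm :: "nat \<Rightarrow> real" where
  "mm t = (real t - 1 + real (kk t)) / (2 * real t - 1)"

definition gg :: "nat \<Rightarrow> real" where
  "gg t = ((1 - mm t) + (real (kk t) / real t + 1/2) * (2 * mm t - 1)) / mm t"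

lemma mm_facts: assumes t: "t \<ge> 5" shows "mm t > 0" "2 * mm t - 1 \<ge> 0"
proof -
  have k: "real (kk t) \<ge> 1" using kk_bounds[OF t] by simp
  have d: "2 * real t - 1 > 0" using t by simp
  show "mm t > 0" unfolding mm_def using k d t by (intro divide_pos_pos) auto
  have "2 * (real t - 1 + real (kk t)) \<ge> 2 * real t - 1" using k by (simp add: algebra_simps)
  then have "2 * mm t \<ge> 1" unfolding mm_def using d by (simp add: field_simps)
  then show "2 * mm t - 1 \<ge> 0" by simp
qed

lemma colfrac_VV: assumes t: "t \<ge> 5" and j: "j < t"
  shows "col_frac (2*t-1) (VV t) j = mm t"
proof -
  have "real (2*t-1) = 2 * real t - 1" using t by linarith
  moreover have "real (t - 1 + kk t) = real t - 1 + real (kk t)" using t by linarith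
  ultimately show ?thesis unfolding col_frac_def mm_def using col_card[OF t j] by simp
qed

lemma rV_le: assumes t: "t \<ge> 5"
  shows "r_V t (2*t-1) (VV t) \<le> gg t"
proof -
  let ?n = "2*t-1"
  have tpos: "real t > 0" using t by simp
  have mV: "m_V t ?n (VV t) = mm t" unfolding m_V_def
    using colfrac_VV[OF t] tpos by simp
  have bound: "r_p t ?n (VV t) p \<le> gg t" if p: "p \<subseteq> {..<t}" "supported t ?n (VV t) p" for p
  proof -
    have fp: "finite p" using p finite_subset by blast
    have s: "(\<Sum>j<t. if j \<in> p then col_frac ?n (VV t) j else 1 - col_frac ?n (VV t) j)
        = (\<Sum>j<t. if j \<in> p then mm t else 1 - mm t)"
    proof (rule sum.cong[OF refl])
      fix j assume "j \<in> {..<t}"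
      then have "j < t" by simp
      from colfrac_VV[OF t this]
      show "(if j \<in> p then col_frac ?n (VV t) j else 1 - col_frac ?n (VV t) j)
        = (if j \<in> p then mm t else 1 - mm t)" by (simp only:)
    qed
    have i1: "{..<t} \<inter> {x. x \<in> p} = p" using p by auto
    have i2: "{..<t} \<inter> - {x. x \<in> p} = {..<t} - p" by auto
    have cd: "card ({..<t} - p) = t - card p" using p fp by (simp add: card_Diff_subset)
    have cp: "card p \<le> t" using p by (metis card_lessThan card_mono finite_lessThan)
    have "(\<Sum>j<t. if j \<in> p then mm t else 1 - mm t) = real (card p) * mm t + (real t - real (card p)) * (1 - mm t)"
      unfolding sum.If_cases[OF finite_lessThan] i1 i2 using cd cp by (simp add: of_nat_diff)
    then have R: "R_p t ?n (VV t) p = (1 - mm t) + (real (card p) / real t) * (2 * mm t - 1)"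
      unfolding R_p_def s using tpos by (simp add: field_simps)
    have "real (card p) / real t \<le> real (kk t) / real t + 1/2"
      using supp_card[OF t p] tpos by (simp add: field_simps)
    then have "(real (card p) / real t) * (2 * mm t - 1) \<le> (real (kk t) / real t + 1/2) * (2 * mm t - 1)"
      by (rule mult_right_mono) (use mm_facts[OF t] in simp)
    then have "R_p t ?n (VV t) p \<le> (1 - mm t) + (real (kk t) / real t + 1/2) * (2 * mm t - 1)"
      unfolding R by linarith
    then show ?thesis unfolding r_p_def gg_def mV using mm_facts[OF t]
      by (simp add: divide_right_mono)
  qed
  let ?S = "{p. p \<subseteq> {..<t} \<and> supported t ?n (VV t) p}"
  have fin: "finite ?S" by (rule finite_subset[of _ "Pow {..<t}"]) auto
  have ne: "?S \<noteq> {}" using supp_exists[of ?n t "VV t"] t by auto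
  show ?thesis unfolding r_V_def
    by (rule Max.boundedI) (use fin ne bound in auto)
qed


lemma x_lim: "(\<lambda>t. real (kk t) / real t) \<longlonglongrightarrow> sc"
proof (rule tendsto_sandwich[of "\<lambda>t. sc - 1 / real t" _ _ "\<lambda>t. sc"])
  have fl: "real (kk t) = of_int \<lfloor>sc * real t\<rfloor>" for t
  proof -
    have "sc * real t \<ge> 0" using sc_bounds by simp
    then show ?thesis unfolding kk_def by simp
  qed
  show "\<forall>\<^sub>F t in sequentially. sc - 1 / real t \<le> real (kk t) / real t"
    using eventually_gt_at_top[of "0::nat"]
  proof eventually_elim
    case (elim t)
    have "sc * real t - 1 \<le> real (kk t)" unfolding fl by linarith
    then have "(sc * real t - 1) / real t \<le> real (kk t) / real t"
      by (rule divide_right_mono) simp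
    moreover have "(sc * real t - 1) / real t = sc - 1 / real t" using elim by (simp add: field_simps)
    ultimately show ?case by simp
  qed
  show "\<forall>\<^sub>F t in sequentially. real (kk t) / real t \<le> sc"
    using eventually_gt_at_top[of "0::nat"]
  proof eventually_elim
    case (elim t)
    have "real (kk t) \<le> sc * real t" unfolding fl by linarith
    then have "real (kk t) / real t \<le> (sc * real t) / real t"
      by (rule divide_right_mono) simp
    then show ?case using elim by simp
  qed
  show "(\<lambda>t. sc) \<longlonglongrightarrow> sc" by simp
  have "(\<lambda>t. sc - 1 / real t) \<longlonglongrightarrow> sc - 0"
    by (intro tendsto_intros lim_inverse_n')
  then show "(\<lambda>t. sc - 1 / real t) \<longlonglongrightarrow> sc" by simp
qed

lemma mm_lim: "mm \<longlonglongrightarrow> (1 + sc) / 2"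
proof -
  have "(\<lambda>t. (1 - 1 / real t + real (kk t) / real t) / (2 - 1 / real t)) \<longlonglongrightarrow> (1 - 0 + sc) / (2 - 0)"
    by (intro tendsto_intros x_lim lim_inverse_n') simp
  moreover have "\<forall>\<^sub>F t in sequentially. (1 - 1 / real t + real (kk t) / real t) / (2 - 1 / real t) = mm t"
    using eventually_gt_at_top[of "0::nat"]
  proof eventually_elim
    case (elim t)
    then have "real t \<ge> 1" by simp
    then show ?case unfolding mm_def by (simp add: field_simps)
  qed
  ultimately show ?thesis by (simp add: tendsto_cong)
qed

lemma gg_lim: "gg \<longlonglongrightarrow> 2 * sqrt 6 - 4"
proof -
  let ?M = "(1 + sc) / 2"
  have M: "?M \<noteq> 0" using sc_bounds by simp
  have "gg \<longlonglongrightarrow> ((1 - ?M) + (sc + 1/2) * (2 * ?M - 1)) / ?M"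
    unfolding gg_def[abs_def] by (intro tendsto_intros mm_lim x_lim M)
  moreover have "((1 - ?M) + (sc + 1/2) * (2 * ?M - 1)) / ?M = 2 * sqrt 6 - 4"
  proof -
    have q: "sqrt 6 * sqrt 6 = 6" by simp
    have qp: "sqrt 6 > 0" by simp
    show ?thesis unfolding sc_def using q qp by (simp add: field_simps)
  qed
  ultimately show ?thesis by simp
qed

theorem theorem5p6:
  shows "limsup (\<lambda>t. ereal (r_t t)) \<le> ereal (2 * sqrt 6 - 4)"
proof -
  have "limsup (\<lambda>t. ereal (r_t t)) \<le> limsup (\<lambda>t. ereal (gg t))"
  proof (rule Limsup_mono)
    show "\<forall>\<^sub>F t in sequentially. ereal (r_t t) \<le> ereal (gg t)"
      using eventually_ge_at_top[of "5::nat"]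
    proof eventually_elim
      case (elim t)
      have "r_t t \<le> r_V t (2*t-1) (VV t)" by (rule r_t_le[OF VV_matrix[OF elim]])
      also have "\<dots> \<le> gg t" by (rule rV_le[OF elim])
      finally show ?case by simp
    qed
  qed
  also have "limsup (\<lambda>t. ereal (gg t)) = ereal (2 * sqrt 6 - 4)"
    by (rule lim_imp_Limsup) (simp_all add: gg_lim)
  finally show ?thesis .
qed

end
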